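(* Let $\theta$ be a regular cardinal and let $I$ be a weakly $\theta$-saturated, $\theta$-indecomposable ideal on a cardinal $\kappa$. Let $\langle S_\alpha:\alpha<\kappa\rangle$ be a sequence of sets of ordinals with $|S_\alpha|<\theta$ for all $\alpha$. If $\langle h_\beta:\beta<\tau\rangle$ is a sequence of functions in $\prod_{\alpha<\kappa}S_\alpha$ that is increasing in the pointwise order $\leq$, with $\mathrm{cf}(\tau)\geq\theta$, then it is eventually constant modulo $I$: there is $\beta^*<\tau$ with $\{\alpha:h_\beta(\alpha)\neq h_{\beta^*}(\alpha)\}\in I$ for all $\beta\geq\beta^*$.
   Context: By an ideal on a cardinal $\kappa$ we mean a proper ideal on $\kappa$ containing all bounded subsets of $\kappa$. $I$ is weakly $\theta$-saturated if there is no partition of $\kappa$ into $\theta$ pairwise disjoint sets not in $I$. $I$ is $\theta$-indecomposable if whenever $\langle A_i:i<\theta\rangle$ are subsets of $\kappa$ with $\bigcup_{i<\theta}A_i\notin I$, there is $w\subseteq\theta$ with $|w|<\theta$ and $\bigcup_{i\in w}A_i\notin I$. *)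

theory Defs
  imports Main
begin

unbundle cardinal_syntax

text \<open>Cardinals and ordinals are represented by well-order relations (HOL-Cardinals).
  The cardinal kappa is a cardinal order K; its elements are Field K.\<close>

definition bounded_in :: "'k rel \<Rightarrow> 'k set \<Rightarrow> bool" where
  "bounded_in K A \<longleftrightarrow> (\<exists>\<xi>\<in>Field K. A \<subseteq> underS K \<xi>)"

definition ideal_on :: "'k rel \<Rightarrow> 'k set set \<Rightarrow> bool" where
  "ideal_on K I \<longleftrightarrow>
     I \<subseteq> Pow (Field K) \<and> {} \<in> I \<and>
     Field K \<notin> I \<and>
     (\<forall>A. A \<subseteq> Field K \<and> bounded_in K A \<longrightarrow> A \<in> I) \<and>
     (\<forall>A B. A \<in> I \<and> B \<subseteq> A \<longrightarrow> B \<in> I) \<and>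
     (\<forall>A B. A \<in> I \<and> B \<in> I \<longrightarrow> A \<union> B \<in> I)"

definition weakly_saturated :: "'t rel \<Rightarrow> 'k rel \<Rightarrow> 'k set set \<Rightarrow> bool" where
  "weakly_saturated \<Theta> K I \<longleftrightarrow>
     \<not> (\<exists>A :: 't \<Rightarrow> 'k set.
           (\<forall>i\<in>Field \<Theta>. A i \<subseteq> Field K \<and> A i \<notin> I) \<and>
           (\<forall>i\<in>Field \<Theta>. \<forall>j\<in>Field \<Theta>. i \<noteq> j \<longrightarrow> A i \<inter> A j = {}) \<and>
           (\<Union>i\<in>Field \<Theta>. A i) = Field K)"

definition indecomposable :: "'t rel \<Rightarrow> 'k rel \<Rightarrow> 'k set set \<Rightarrow> bool" where
  "indecomposable \<Theta> K I \<longleftrightarrow>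
     (\<forall>A :: 't \<Rightarrow> 'k set.
        (\<forall>i\<in>Field \<Theta>. A i \<subseteq> Field K) \<and> (\<Union>i\<in>Field \<Theta>. A i) \<notin> I \<longrightarrow>
        (\<exists>w. w \<subseteq> Field \<Theta> \<and> |w| <o \<Theta> \<and> (\<Union>i\<in>w. A i) \<notin> I))"

definition regular_cardinal :: "'t rel \<Rightarrow> bool" where
  "regular_cardinal \<Theta> \<longleftrightarrow> Card_order \<Theta> \<and> infinite (Field \<Theta>) \<and> regularCard \<Theta>"

definition cf_ge :: "'b rel \<Rightarrow> 't rel \<Rightarrow> bool" where
  "cf_ge T \<Theta> \<longleftrightarrow>
     (\<forall>X. X \<subseteq> Field T \<and> (\<forall>\<beta>\<in>Field T. \<exists>x\<in>X. (\<beta>, x) \<in> T) \<longrightarrow> \<not> ( |X| <o \<Theta>))"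

definition card_less :: "'a set \<Rightarrow> 't rel \<Rightarrow> bool" where
  "card_less A \<Theta> \<longleftrightarrow> |A| <o \<Theta>"

end

theory Submission
  imports Defs
begin

lemma wo_basic:
  assumes "Well_order r"
  shows "\<And>a. a \<in> Field r \<Longrightarrow> (a,a) \<in> r"
    and "\<And>a b c. (a,b) \<in> r \<Longrightarrow> (b,c) \<in> r \<Longrightarrow> (a,c) \<in> r"
    and "\<And>a b. (a,b) \<in> r \<Longrightarrow> (b,a) \<in> r \<Longrightarrow> a = b"
    and "\<And>a b. a \<in> Field r \<Longrightarrow> b \<in> Field r \<Longrightarrow> (a,b) \<in> r \<or> (b,a) \<in> r"
proof -
  interpret wo_rel r using assms by (simp add: wo_rel_def)
  show "\<And>a. a \<in> Field r \<Longrightarrow> (a,a) \<in> r" using REFL by (auto simp: refl_on_def)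
  show "\<And>a b c. (a,b) \<in> r \<Longrightarrow> (b,c) \<in> r \<Longrightarrow> (a,c) \<in> r" using TRANS by (meson transD)
  show "\<And>a b. (a,b) \<in> r \<Longrightarrow> (b,a) \<in> r \<Longrightarrow> a = b" using ANTISYM by (meson antisymD)
  show "\<And>a b. a \<in> Field r \<Longrightarrow> b \<in> Field r \<Longrightarrow> (a,b) \<in> r \<or> (b,a) \<in> r" using TOTALS by blast
qed

lemma regular_bound:
  assumes "regular_cardinal \<Theta>" "X \<subseteq> Field \<Theta>" "|X| <o \<Theta>"
  shows "\<exists>j\<in>Field \<Theta>. \<forall>x\<in>X. (x,j) \<in> \<Theta> \<and> x \<noteq> j"
proof -
  have co: "Card_order \<Theta>" "infinite (Field \<Theta>)" "regularCard \<Theta>"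
    using assms(1) by (auto simp: regular_cardinal_def)
  have wo: "Well_order \<Theta>" using co(1) by (simp add: card_order_on_well_order_on)
  have "\<not> |X| =o \<Theta>" using assms(3) not_ordLess_ordIso by blast
  hence "\<not> cofinal X \<Theta>" using co(3) assms(2) unfolding regularCard_def by blast
  then obtain a where a: "a \<in> Field \<Theta>" "\<forall>b\<in>X. \<not> (a \<noteq> b \<and> (a,b) \<in> \<Theta>)"
    unfolding cofinal_def by blast
  obtain b where b: "b \<in> Field \<Theta>" "a \<noteq> b" "(a,b) \<in> \<Theta>"
    using infinite_Card_order_limit[OF co(1) co(2) a(1)] by blast
  have "\<forall>x\<in>X. (x,b) \<in> \<Theta> \<and> x \<noteq> b"
  proof
    fix x assume x: "x \<in> X"
    have xF: "x \<in> Field \<Theta>" using x assms(2) by blast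
    have "(x,a) \<in> \<Theta>"
    proof (cases "x = a")
      case True thus ?thesis using wo_basic(1)[OF wo] a(1) by simp
    next
      case False
      hence "(a,x) \<notin> \<Theta>" using a(2) x by auto
      thus ?thesis using wo_basic(4)[OF wo, OF xF a(1)] by blast
    qed
    hence "(x,b) \<in> \<Theta>" using b(3) wo_basic(2)[OF wo] by metis
    moreover have "x \<noteq> b"
    proof
      assume "x = b"
      hence "(b,a) \<in> \<Theta>" using \<open>(x,a) \<in> \<Theta>\<close> by simp
      thus False using b(2,3) wo_basic(3)[OF wo] by metis
    qed
    ultimately show "(x,b) \<in> \<Theta> \<and> x \<noteq> b" by simp
  qed
  thus ?thesis using b(1) by blast
qed

lemma zorn_intervals:
  fixes R :: "'a rel" and \<Theta> :: "'t rel"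
  assumes wo: "Well_order R"
    and bnd: "\<forall>X. X \<subseteq> Field R \<and> |X| <o \<Theta> \<longrightarrow> (\<exists>j\<in>Field R. \<forall>x\<in>X. (x,j)\<in>R \<and> x\<noteq>j)"
    and step: "\<forall>j\<in>Field R. \<exists>m. (j,m)\<in>R \<and> j\<noteq>m \<and> P j m"
  shows "\<exists>M. M \<subseteq> {p. p\<in>R \<and> fst p \<noteq> snd p \<and> P (fst p) (snd p)}
     \<and> (\<forall>p\<in>M. \<forall>q\<in>M. p\<noteq>q \<longrightarrow> (snd p, fst q)\<in>R \<or> (snd q, fst p)\<in>R) \<and> \<not> |M| <o \<Theta>"
proof -
  define G where "G = {p. p\<in>R \<and> fst p \<noteq> snd p \<and> P (fst p) (snd p)}"
  define D where "D = (\<lambda>M. \<forall>p\<in>M. \<forall>q\<in>M. p\<noteq>q \<longrightarrow> (snd p, fst q)\<in>R \<or> (snd q, fst p)\<in>R)"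
  define \<A> where "\<A> = {M. M \<subseteq> G \<and> D M}"
  have "\<forall>C\<in>chains \<A>. \<Union>C \<in> \<A>"
  proof
    fix C assume C: "C \<in> chains \<A>"
    have "\<Union>C \<subseteq> G" using C by (auto simp: chains_def \<A>_def)
    moreover have "D (\<Union>C)"
      unfolding D_def
    proof (intro ballI impI)
      fix p q assume "p \<in> \<Union>C" "q \<in> \<Union>C" "p \<noteq> q"
      then obtain A B where AB: "A \<in> C" "B \<in> C" "p \<in> A" "q \<in> B" by blast
      have "A \<subseteq> B \<or> B \<subseteq> A" using C AB unfolding chains_def chain_subset_def by blast
      moreover have "D A" "D B" using C AB unfolding chains_def \<A>_def by auto
      ultimately show "(snd p, fst q)\<in>R \<or> (snd q, fst p)\<in>R"
        using AB \<open>p \<noteq> q\<close> unfolding D_def by blast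
    qed
    ultimately show "\<Union>C \<in> \<A>" by (simp add: \<A>_def)
  qed
  then obtain M where M: "M \<in> \<A>" "\<forall>X\<in>\<A>. M \<subseteq> X \<longrightarrow> X = M" using Zorn_Lemma by blast
  have "\<not> |M| <o \<Theta>"
  proof
    assume small: "|M| <o \<Theta>"
    have "|snd ` M| <o \<Theta>" using card_of_image small ordLeq_ordLess_trans by blast
    moreover have "snd ` M \<subseteq> Field R" using M(1) by (force simp: \<A>_def G_def Field_def)
    ultimately obtain j where j: "j \<in> Field R" "\<forall>x\<in>snd ` M. (x,j)\<in>R \<and> x\<noteq>j"
      using bnd by blast
    obtain m where m: "(j,m)\<in>R" "j\<noteq>m" "P j m" using step j(1) by blast
    have notin: "(j,m) \<notin> M"
    proof
      assume "(j,m) \<in> M"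
      hence "(m,j) \<in> R" using j(2) by force
      thus False using m wo_basic(3)[OF wo] by blast
    qed
    have "insert (j,m) M \<in> \<A>"
      using M(1) m j(2) unfolding \<A>_def G_def D_def by auto
    hence "insert (j,m) M = M" using M(2) by blast
    thus False using notin by blast
  qed
  thus ?thesis using M(1) unfolding \<A>_def G_def D_def by blast
qed

lemma no_small_cover:
  fixes \<Theta> :: "'t rel" and K :: "'k rel" and Z :: "'t \<Rightarrow> 'k set"
  assumes reg: "regular_cardinal \<Theta>" and idl: "ideal_on K I"
    and sat: "weakly_saturated \<Theta> K I" and ind: "indecomposable \<Theta> K I"
    and Z: "\<forall>i\<in>Field \<Theta>. Z i \<subseteq> Field K \<and> Z i \<notin> I"
    and cnt: "\<forall>\<alpha>\<in>Field K. |{i\<in>Field \<Theta>. \<alpha> \<in> Z i}| <o \<Theta>"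
  shows False
proof -
  have co: "Card_order \<Theta>" "infinite (Field \<Theta>)"
    using reg by (auto simp: regular_cardinal_def)
  have wo: "Well_order \<Theta>" using co(1) by (simp add: card_order_on_well_order_on)
  have down: "\<And>A B. A \<in> I \<Longrightarrow> B \<subseteq> A \<Longrightarrow> B \<in> I" using idl unfolding ideal_on_def by blast
  have empty: "{} \<in> I" using idl unfolding ideal_on_def by blast
  define W where "W = (\<lambda>j. {\<alpha>\<in>Field K. \<exists>i\<in>Field \<Theta>. (j,i)\<in>\<Theta> \<and> \<alpha> \<in> Z i})"
  have Wmono: "W b \<subseteq> W a" if "(a,b)\<in>\<Theta>" for a b
    using that wo_basic(2)[OF wo] unfolding W_def by blast
  have WK: "W j \<subseteq> Field K" for j unfolding W_def by blast
  have escape: "\<exists>k\<in>Field \<Theta>. \<alpha> \<notin> W k" if \<alpha>: "\<alpha> \<in> Field K" for \<alpha>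
  proof -
    obtain k where k: "k \<in> Field \<Theta>" "\<forall>x\<in>{i\<in>Field \<Theta>. \<alpha> \<in> Z i}. (x,k) \<in> \<Theta> \<and> x \<noteq> k"
      using regular_bound[OF reg, of "{i\<in>Field \<Theta>. \<alpha> \<in> Z i}"] cnt \<alpha> by blast
    have "\<alpha> \<notin> W k"
    proof
      assume "\<alpha> \<in> W k"
      then obtain i where i: "i \<in> Field \<Theta>" "(k,i)\<in>\<Theta>" "\<alpha> \<in> Z i" unfolding W_def by blast
      hence "(i,k) \<in> \<Theta>" "i \<noteq> k" using k(2) by auto
      thus False using i(2) wo_basic(3)[OF wo] by metis
    qed
    thus ?thesis using k(1) by blast
  qed
  have step: "\<forall>j\<in>Field \<Theta>. \<exists>m. (j,m)\<in>\<Theta> \<and> j\<noteq>m \<and> W j - W m \<notin> I"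
  proof
    fix j assume j: "j \<in> Field \<Theta>"
    have "Z j \<subseteq> W j" using j Z wo_basic(1)[OF wo] unfolding W_def by blast
    hence Wj: "W j \<notin> I" using Z j down by blast
    define A where "A = (\<lambda>k. W j - W k)"
    have "(\<Union>k\<in>Field \<Theta>. A k) = W j"
    proof
      show "(\<Union>k\<in>Field \<Theta>. A k) \<subseteq> W j" unfolding A_def by blast
      show "W j \<subseteq> (\<Union>k\<in>Field \<Theta>. A k)"
      proof
        fix \<alpha> assume a: "\<alpha> \<in> W j"
        then obtain k where "k \<in> Field \<Theta>" "\<alpha> \<notin> W k" using escape WK by blast
        thus "\<alpha> \<in> (\<Union>k\<in>Field \<Theta>. A k)" using a unfolding A_def by blast
      qed
    qed
    moreover have "\<forall>k\<in>Field \<Theta>. A k \<subseteq> Field K" using WK unfolding A_def by blast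
    ultimately obtain w where w: "w \<subseteq> Field \<Theta>" "|w| <o \<Theta>" "(\<Union>k\<in>w. A k) \<notin> I"
      using ind Wj unfolding indecomposable_def by metis
    obtain m where m: "m \<in> Field \<Theta>" "\<forall>x\<in>w. (x,m) \<in> \<Theta> \<and> x \<noteq> m"
      using regular_bound[OF reg w(1,2)] by blast
    have "(\<Union>k\<in>w. A k) \<subseteq> W j - W m"
      unfolding A_def using m(2) Wmono by blast
    hence pos: "W j - W m \<notin> I" using w(3) down by blast
    have "(j,m) \<in> \<Theta>"
    proof (rule ccontr)
      assume "(j,m) \<notin> \<Theta>"
      hence "(m,j) \<in> \<Theta>" using wo_basic(4)[OF wo j m(1)] by blast
      hence "W j - W m = {}" using Wmono by blast
      thus False using pos empty by metis
    qed
    moreover have "j \<noteq> m" using pos empty by auto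
    ultimately show "\<exists>m. (j,m)\<in>\<Theta> \<and> j\<noteq>m \<and> W j - W m \<notin> I" using pos by blast
  qed
  have bnd: "\<forall>X. X \<subseteq> Field \<Theta> \<and> |X| <o \<Theta> \<longrightarrow> (\<exists>j\<in>Field \<Theta>. \<forall>x\<in>X. (x,j)\<in>\<Theta> \<and> x\<noteq>j)"
    using regular_bound[OF reg] by blast
  obtain M where M: "M \<subseteq> {p. p\<in>\<Theta> \<and> fst p \<noteq> snd p \<and> W (fst p) - W (snd p) \<notin> I}"
     "\<forall>p\<in>M. \<forall>q\<in>M. p\<noteq>q \<longrightarrow> (snd p, fst q)\<in>\<Theta> \<or> (snd q, fst p)\<in>\<Theta>" "\<not> |M| <o \<Theta>"
    using zorn_intervals[OF wo bnd, of "\<lambda>a b. W a - W b \<notin> I"] step by blast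
  have "\<Theta> \<le>o |M|" using M(3) ordLess_or_ordLeq[OF card_of_Well_order wo] by blast
  hence "|Field \<Theta>| \<le>o |M|" using card_of_Field_ordIso[OF co(1)] ordIso_ordLeq_trans by blast
  then obtain e where e: "inj_on e (Field \<Theta>)" "e ` Field \<Theta> \<subseteq> M" using card_of_ordLeq by metis
  define E where "E = (\<lambda>i. W (fst (e i)) - W (snd (e i)))"
  have Epos: "E i \<notin> I" if "i \<in> Field \<Theta>" for i using that e(2) M(1) unfolding E_def by blast
  have EK: "E i \<subseteq> Field K" for i using WK unfolding E_def by blast
  have Edisj: "E i \<inter> E j = {}" if ij: "i \<in> Field \<Theta>" "j \<in> Field \<Theta>" "i \<noteq> j" for i j
  proof -
    have pq: "e i \<in> M" "e j \<in> M" "e i \<noteq> e j" using ij e inj_on_eq_iff by fastforce+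
    hence "(snd (e i), fst (e j))\<in>\<Theta> \<or> (snd (e j), fst (e i))\<in>\<Theta>" using M(2) by blast
    thus ?thesis
    proof
      assume "(snd (e i), fst (e j))\<in>\<Theta>"
      hence "W (fst (e j)) \<subseteq> W (snd (e i))" using Wmono by blast
      thus ?thesis unfolding E_def by blast
    next
      assume "(snd (e j), fst (e i))\<in>\<Theta>"
      hence "W (fst (e i)) \<subseteq> W (snd (e j))" using Wmono by blast
      thus ?thesis unfolding E_def by blast
    qed
  qed
  obtain i0 where i0: "i0 \<in> Field \<Theta>" using co(2) by (metis finite.emptyI ex_in_conv)
  define A where "A = (\<lambda>i. if i = i0 then Field K - (\<Union>l\<in>Field \<Theta> - {i0}. E l) else E i)"
  have "E i0 \<subseteq> A i0" unfolding A_def using EK Edisj i0 by (auto, metis IntI empty_iff)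
  hence Ai0: "A i0 \<notin> I" using Epos[OF i0] down by blast
  have c1: "\<forall>i\<in>Field \<Theta>. A i \<subseteq> Field K \<and> A i \<notin> I"
    using Ai0 Epos EK unfolding A_def by auto
  have c2: "\<forall>i\<in>Field \<Theta>. \<forall>j\<in>Field \<Theta>. i \<noteq> j \<longrightarrow> A i \<inter> A j = {}"
    unfolding A_def using Edisj by auto
  have c3: "(\<Union>i\<in>Field \<Theta>. A i) = Field K"
  proof
    show "(\<Union>i\<in>Field \<Theta>. A i) \<subseteq> Field K" using c1 by blast
    show "Field K \<subseteq> (\<Union>i\<in>Field \<Theta>. A i)"
    proof
      fix \<alpha> assume a: "\<alpha> \<in> Field K"
      show "\<alpha> \<in> (\<Union>i\<in>Field \<Theta>. A i)"
      proof (cases "\<exists>l\<in>Field \<Theta> - {i0}. \<alpha> \<in> E l")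
        case True
        then obtain l where "l \<in> Field \<Theta>" "l \<noteq> i0" "\<alpha> \<in> E l" by blast
        thus ?thesis unfolding A_def by auto
      next
        case False
        hence "\<alpha> \<in> A i0" using a unfolding A_def by auto
        thus ?thesis using i0 by blast
      qed
    qed
  qed
  show False using sat c1 c2 c3 unfolding weakly_saturated_def by blast
qed

theorem corollary2p2:
  fixes \<Theta> :: "'t rel" and K :: "'k rel" and I :: "'k set set"
    and S :: "'k \<Rightarrow> 'o::wellorder set"
    and T :: "'b rel" and h :: "'b \<Rightarrow> 'k \<Rightarrow> 'o"
  assumes "regular_cardinal \<Theta>"
    and "Card_order K"
    and "ideal_on K I"
    and "weakly_saturated \<Theta> K I"
    and "indecomposable \<Theta> K I"
    and "\<forall>\<alpha>\<in>Field K. card_less (S \<alpha>) \<Theta>"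
    and "Well_order T"
    and "\<forall>\<beta>\<in>Field T. \<forall>\<alpha>\<in>Field K. h \<beta> \<alpha> \<in> S \<alpha>"
    and "\<forall>\<beta>\<in>Field T. \<forall>\<beta>'\<in>Field T. (\<beta>, \<beta>') \<in> T \<longrightarrow> (\<forall>\<alpha>\<in>Field K. h \<beta> \<alpha> \<le> h \<beta>' \<alpha>)"
    and "cf_ge T \<Theta>"
  shows "\<exists>\<beta>s\<in>Field T. \<forall>\<beta>\<in>Field T. (\<beta>s, \<beta>) \<in> T \<longrightarrow>
           {\<alpha>\<in>Field K. h \<beta> \<alpha> \<noteq> h \<beta>s \<alpha>} \<in> I"
proof (rule ccontr)
  assume neg: "\<not> ?thesis"
  note reg = assms(1) and idl = assms(3) and wo = assms(7) and mono = assms(9)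
  have co: "Card_order \<Theta>" using reg by (auto simp: regular_cardinal_def)
  have woT: "Well_order \<Theta>" using co by (simp add: card_order_on_well_order_on)
  have empty: "{} \<in> I" using idl unfolding ideal_on_def by blast
  define Zs where "Zs = (\<lambda>b b'. {\<alpha>\<in>Field K. h b' \<alpha> \<noteq> h b \<alpha>})"
  have step: "\<forall>j\<in>Field T. \<exists>m. (j,m)\<in>T \<and> j\<noteq>m \<and> Zs j m \<notin> I"
  proof
    fix j assume j: "j \<in> Field T"
    then obtain m where m: "m \<in> Field T" "(j,m) \<in> T" "Zs j m \<notin> I"
      using neg unfolding Zs_def by blast
    have "j \<noteq> m"
    proof
      assume "j = m"
      hence "Zs j m = {}" unfolding Zs_def by simp
      thus False using m(3) empty by simp
    qed
    thus "\<exists>m. (j,m)\<in>T \<and> j\<noteq>m \<and> Zs j m \<notin> I" using m by blast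
  qed
  have bnd: "\<forall>X. X \<subseteq> Field T \<and> |X| <o \<Theta> \<longrightarrow> (\<exists>j\<in>Field T. \<forall>x\<in>X. (x,j)\<in>T \<and> x\<noteq>j)"
  proof (intro allI impI)
    fix X assume X: "X \<subseteq> Field T \<and> |X| <o \<Theta>"
    have "\<not> (\<forall>\<beta>\<in>Field T. \<exists>x\<in>X. (\<beta>,x)\<in>T)"
      using assms(10) X unfolding cf_ge_def by blast
    then obtain b where b: "b \<in> Field T" "\<forall>x\<in>X. (b,x) \<notin> T" by blast
    have "\<forall>x\<in>X. (x,b)\<in>T \<and> x\<noteq>b"
    proof
      fix x assume x: "x \<in> X"
      hence xF: "x \<in> Field T" using X by blast
      have "(b,x) \<notin> T" using b x by blast
      moreover have "(b,b) \<in> T" using wo_basic(1)[OF wo b(1)] .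
      ultimately show "(x,b)\<in>T \<and> x\<noteq>b" using wo_basic(4)[OF wo xF b(1)] by metis
    qed
    thus "\<exists>j\<in>Field T. \<forall>x\<in>X. (x,j)\<in>T \<and> x\<noteq>j" using b(1) by blast
  qed
  obtain M where M: "M \<subseteq> {p. p\<in>T \<and> fst p \<noteq> snd p \<and> Zs (fst p) (snd p) \<notin> I}"
     "\<forall>p\<in>M. \<forall>q\<in>M. p\<noteq>q \<longrightarrow> (snd p, fst q)\<in>T \<or> (snd q, fst p)\<in>T" "\<not> |M| <o \<Theta>"
    using zorn_intervals[OF wo bnd, of "\<lambda>a b. Zs a b \<notin> I"] step by blast
  have "\<Theta> \<le>o |M|" using M(3) ordLess_or_ordLeq[OF card_of_Well_order woT] by blast
  hence "|Field \<Theta>| \<le>o |M|" using card_of_Field_ordIso[OF co] ordIso_ordLeq_trans by blast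
  then obtain e where e: "inj_on e (Field \<Theta>)" "e ` Field \<Theta> \<subseteq> M" using card_of_ordLeq by metis
  have eT: "fst (e i) \<in> Field T" "snd (e i) \<in> Field T" "(fst (e i), snd (e i)) \<in> T"
     "Zs (fst (e i)) (snd (e i)) \<notin> I" if "i \<in> Field \<Theta>" for i
  proof -
    have "e i \<in> M" using that e(2) by blast
    hence p: "e i \<in> T" "Zs (fst (e i)) (snd (e i)) \<notin> I" using M(1) by auto
    thus "(fst (e i), snd (e i)) \<in> T" by simp
    thus "fst (e i) \<in> Field T" "snd (e i) \<in> Field T" by (metis FieldI1 FieldI2 prod.collapse)+
    show "Zs (fst (e i)) (snd (e i)) \<notin> I" using p by simp
  qed
  define Z where "Z = (\<lambda>i. Zs (fst (e i)) (snd (e i)))"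
  have Zc: "\<forall>i\<in>Field \<Theta>. Z i \<subseteq> Field K \<and> Z i \<notin> I" using eT(4) unfolding Z_def Zs_def by auto
  have cnt: "\<forall>\<alpha>\<in>Field K. |{i\<in>Field \<Theta>. \<alpha> \<in> Z i}| <o \<Theta>"
  proof
    fix \<alpha> assume a: "\<alpha> \<in> Field K"
    define X where "X = {i\<in>Field \<Theta>. \<alpha> \<in> Z i}"
    define f where "f = (\<lambda>i. h (snd (e i)) \<alpha>)"
    have lt: "f i < f j" if ij: "i \<in> X" "j \<in> X" "(snd (e i), fst (e j)) \<in> T" for i j
    proof -
      have iF: "i \<in> Field \<Theta>" "j \<in> Field \<Theta>" using ij unfolding X_def by auto
      have "h (snd (e i)) \<alpha> \<le> h (fst (e j)) \<alpha>"
        using mono eT(1,2)[OF iF(1)] eT(1,2)[OF iF(2)] ij(3) a by blast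
      moreover have "h (fst (e j)) \<alpha> \<le> h (snd (e j)) \<alpha>"
        using mono eT(1,2,3)[OF iF(2)] a by blast
      moreover have "h (snd (e j)) \<alpha> \<noteq> h (fst (e j)) \<alpha>"
        using ij(2) unfolding X_def Z_def Zs_def by auto
      ultimately show ?thesis unfolding f_def by (metis le_less_trans order.not_eq_order_implies_strict)
    qed
    have "inj_on f X"
    proof (rule inj_onI)
      fix i j assume ij: "i \<in> X" "j \<in> X" "f i = f j"
      show "i = j"
      proof (rule ccontr)
        assume "i \<noteq> j"
        moreover have "i \<in> Field \<Theta>" "j \<in> Field \<Theta>" using ij unfolding X_def by auto
        ultimately have "e i \<noteq> e j" "e i \<in> M" "e j \<in> M" using e inj_on_eq_iff by fastforce+
        hence "(snd (e i), fst (e j))\<in>T \<or> (snd (e j), fst (e i))\<in>T" using M(2) by blast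
        thus False using lt[OF ij(1,2)] lt[OF ij(2,1)] ij(3) by auto
      qed
    qed
    moreover have "f ` X \<subseteq> S \<alpha>"
      using assms(8) eT(2) a unfolding f_def X_def by auto
    ultimately have "|X| \<le>o |S \<alpha>|" using card_of_ordLeq by blast
    moreover have "|S \<alpha>| <o \<Theta>" using assms(6) a unfolding card_less_def by blast
    ultimately show "|{i\<in>Field \<Theta>. \<alpha> \<in> Z i}| <o \<Theta>"
      unfolding X_def using ordLeq_ordLess_trans by blast
  qed
  show False using no_small_cover[OF reg idl assms(4) assms(5) Zc cnt] .
qed

end
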